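(* Let $\chi:\mathcal H\to\mathcal H_L^\chi\otimes\mathcal H_R^\chi$ be a splitting map and $A\in\mathcal L(\mathcal H)$. Then $A$ is strictly $\chi$-local if and only if there exists a $\chi$-consistent $\tilde A\in\mathcal L(\mathcal H_L^\chi)$ such that $A=\chi^\dagger(\tilde A\otimes\mathbb 1)\chi$.
   Context: All Hilbert spaces are finite-dimensional and complex. A splitting map on $\mathcal H$ is an isometry $\chi:\mathcal H\to\mathcal H_L^\chi\otimes\mathcal H_R^\chi$; $\pi^\chi=\chi\chi^\dagger$. $\tilde A\in\mathcal L(\mathcal H_L^\chi)$ is $\chi$-consistent if $\pi^\chi(\tilde A\otimes\mathbb 1)=(\tilde A\otimes\mathbb 1)\pi^\chi$. $A\in\mathcal L(\mathcal H)$ is strictly $\chi$-local if there exists $\tilde A\in\mathcal L(\mathcal H_L^\chi)$ with $A\chi^\dagger=\chi^\dagger(\tilde A\otimes\mathbb 1)$ and $\chi A=(\tilde A\otimes\mathbb 1)\chi$. *)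

theory Defs
  imports Complex_Main "Jordan_Normal_Form.Matrix"
begin

text \<open>Finite-dimensional complex Hilbert spaces are modelled as C^n; linear maps as
complex matrices (w.r.t. orthonormal bases).  H_L = C^a, H_R = C^b, and
H_L \<otimes> H_R = C^(a*b) with basis index (i,k) \<mapsto> i*b + k (Kronecker convention).\<close>

definition adj :: "complex mat \<Rightarrow> complex mat" where
  "adj M = mat (dim_col M) (dim_row M) (\<lambda>(i,j). cnj (M $$ (j,i)))"

definition kron :: "complex mat \<Rightarrow> complex mat \<Rightarrow> complex mat" where
  "kron M N = mat (dim_row M * dim_row N) (dim_col M * dim_col N)
     (\<lambda>(i,j). M $$ (i div dim_row N, j div dim_col N) * N $$ (i mod dim_row N, j mod dim_col N))"

definition splitting_map :: "nat \<Rightarrow> nat \<Rightarrow> nat \<Rightarrow> complex mat \<Rightarrow> bool" where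
  "splitting_map n a b chi \<longleftrightarrow> chi \<in> carrier_mat (a*b) n \<and> adj chi * chi = 1\<^sub>m n"

definition proj :: "complex mat \<Rightarrow> complex mat" where
  "proj chi = chi * adj chi"

definition consistent :: "nat \<Rightarrow> complex mat \<Rightarrow> complex mat \<Rightarrow> bool" where
  "consistent b chi At \<longleftrightarrow>
     proj chi * kron At (1\<^sub>m b) = kron At (1\<^sub>m b) * proj chi"

definition strictly_local :: "nat \<Rightarrow> nat \<Rightarrow> complex mat \<Rightarrow> complex mat \<Rightarrow> bool" where
  "strictly_local a b chi A \<longleftrightarrow>
     (\<exists>At \<in> carrier_mat a a.
        A * adj chi = adj chi * kron At (1\<^sub>m b) \<and> chi * A = kron At (1\<^sub>m b) * chi)"

end

theory Submission
  imports Defs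
begin

lemma adj_carrier: "M \<in> carrier_mat r c \<Longrightarrow> adj M \<in> carrier_mat c r"
  by (auto simp: adj_def)

lemma kron_carrier: "At \<in> carrier_mat a a \<Longrightarrow> kron At (1\<^sub>m b) \<in> carrier_mat (a*b) (a*b)"
  by (auto simp: kron_def)

theorem mainTheorem5:
  fixes n a b :: nat and chi A :: "complex mat"
  assumes "splitting_map n a b chi"
    and "A \<in> carrier_mat n n"
  shows "strictly_local a b chi A \<longleftrightarrow>
    (\<exists>At \<in> carrier_mat a a. consistent b chi At \<and> A = adj chi * kron At (1\<^sub>m b) * chi)"
proof -
  have C: "chi \<in> carrier_mat (a*b) n" and CC: "adj chi * chi = 1\<^sub>m n"
    using assms(1) by (auto simp: splitting_map_def)
  have Cs: "adj chi \<in> carrier_mat n (a*b)" using C by (rule adj_carrier)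
  note A = assms(2)
  have P: "chi * adj chi \<in> carrier_mat (a*b) (a*b)" using C Cs by (rule mult_carrier_mat)
  have CA: "chi * A \<in> carrier_mat (a*b) n" using C A by (rule mult_carrier_mat)
  show ?thesis
  proof
    assume "strictly_local a b chi A"
    then obtain At where At: "At \<in> carrier_mat a a"
      and e1: "A * adj chi = adj chi * kron At (1\<^sub>m b)"
      and e2: "chi * A = kron At (1\<^sub>m b) * chi"
      unfolding strictly_local_def by blast
    define K where "K = kron At (1\<^sub>m b)"
    have K: "K \<in> carrier_mat (a*b) (a*b)" using At by (simp add: K_def kron_carrier)
    have KC: "K * chi \<in> carrier_mat (a*b) n" using K C by (rule mult_carrier_mat)
    have CsK: "adj chi * K \<in> carrier_mat n (a*b)" using Cs K by (rule mult_carrier_mat)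
    have PK2: "chi * adj chi * K \<in> carrier_mat (a*b) (a*b)" using P K by (rule mult_carrier_mat)
    have KP: "K * (chi * adj chi) \<in> carrier_mat (a*b) (a*b)" using K P by (rule mult_carrier_mat)
    have "A = (adj chi * chi) * A" using CC A by simp
    also have "\<dots> = adj chi * (chi * A)" using Cs C A by (simp add: assoc_mult_mat mult_carrier_mat)
    also have "\<dots> = adj chi * K * chi" using e2 Cs C K P CA KC CsK PK2 KP A by (simp add: K_def assoc_mult_mat mult_carrier_mat)
    finally have a1: "A = adj chi * K * chi" .
    have "proj chi * K = chi * (adj chi * K)" using Cs C K P CA KC CsK PK2 KP A by (simp add: proj_def assoc_mult_mat mult_carrier_mat)
    also have "\<dots> = chi * (A * adj chi)" using e1 by (simp add: K_def)
    also have "\<dots> = (chi * A) * adj chi" using Cs C A by (simp add: assoc_mult_mat mult_carrier_mat)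
    also have "\<dots> = K * proj chi" using e2 Cs C K P CA KC CsK PK2 KP A by (simp add: K_def proj_def assoc_mult_mat mult_carrier_mat)
    finally have "consistent b chi At" by (simp add: consistent_def K_def)
    with a1 At show "\<exists>At \<in> carrier_mat a a. consistent b chi At \<and> A = adj chi * kron At (1\<^sub>m b) * chi"
      by (auto simp: K_def)
  next
    assume "\<exists>At \<in> carrier_mat a a. consistent b chi At \<and> A = adj chi * kron At (1\<^sub>m b) * chi"
    then obtain At where At: "At \<in> carrier_mat a a" and cons: "consistent b chi At"
      and a1: "A = adj chi * kron At (1\<^sub>m b) * chi" by blast
    define K where "K = kron At (1\<^sub>m b)"
    have K: "K \<in> carrier_mat (a*b) (a*b)" using At by (simp add: K_def kron_carrier)
    have KC: "K * chi \<in> carrier_mat (a*b) n" using K C by (rule mult_carrier_mat)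
    have CsK: "adj chi * K \<in> carrier_mat n (a*b)" using Cs K by (rule mult_carrier_mat)
    have PK2: "chi * adj chi * K \<in> carrier_mat (a*b) (a*b)" using P K by (rule mult_carrier_mat)
    have KP: "K * (chi * adj chi) \<in> carrier_mat (a*b) (a*b)" using K P by (rule mult_carrier_mat)
    have PK: "chi * adj chi * K = K * (chi * adj chi)" using cons by (simp add: consistent_def proj_def K_def)
    have "A * adj chi = adj chi * K * chi * adj chi" using a1 by (simp add: K_def)
    also have "\<dots> = adj chi * K * (chi * adj chi)"
      by (rule assoc_mult_mat[OF mult_carrier_mat[OF Cs K] C Cs])
    also have "\<dots> = adj chi * (K * (chi * adj chi))" by (rule assoc_mult_mat[OF Cs K P])
    also have "\<dots> = adj chi * (chi * adj chi * K)" using PK by simp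
    also have "\<dots> = adj chi * (chi * (adj chi * K))" using assoc_mult_mat[OF C Cs K] by simp
    also have "\<dots> = (adj chi * chi) * (adj chi * K)" using assoc_mult_mat[OF Cs C CsK] by simp
    also have "\<dots> = adj chi * K" using CC left_mult_one_mat[OF CsK] by simp
    finally have e1: "A * adj chi = adj chi * K" .
    have "chi * A = chi * (adj chi * K * chi)" using a1 by (simp add: K_def)
    also have "\<dots> = chi * (adj chi * (K * chi))" using assoc_mult_mat[OF Cs K C] by simp
    also have "\<dots> = chi * adj chi * (K * chi)" using assoc_mult_mat[OF C Cs KC] by simp
    also have "\<dots> = chi * adj chi * K * chi" using assoc_mult_mat[OF P K C] by simp
    also have "\<dots> = K * (chi * adj chi) * chi" using PK by simp
    also have "\<dots> = K * (chi * adj chi * chi)" using assoc_mult_mat[OF K P C] by simp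
    also have "\<dots> = K * (chi * (adj chi * chi))" using assoc_mult_mat[OF C Cs C] by simp
    also have "\<dots> = K * chi" using CC right_mult_one_mat[OF C] by simp
    finally have e2: "chi * A = K * chi" .
    show "strictly_local a b chi A" unfolding strictly_local_def
      using At e1 e2 by (auto simp: K_def)
  qed
qed

end
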